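(* Let $n\geq 4$ and let $T=S_{x,y}$ be a double star on $n$ vertices, where $x+y=n-2$. If $T$ is maximal with respect to $e^{M_2}$ among all double stars on $n$ vertices, then $|x-y|\leq 1$, i.e., $T$ is the balanced double star $S_{\lfloor\frac{n-2}{2}\rfloor,\lceil\frac{n-2}{2}\rceil}$. Moreover, $$e^{M_2}(S_{\lfloor\frac{n-2}{2}\rfloor,\lceil\frac{n-2}{2}\rceil})=\begin{cases} e^{\frac{n^2}{4}}+(n-2)e^{\frac{n}{2}}, & n \text{ even},\\ e^{\frac{n^2-1}{4}}+\frac{n-3}{2}e^{\frac{n-1}{2}}+\frac{n-1}{2}e^{\frac{n+1}{2}}, & n\text{ odd}.\end{cases}$$
   Context: For a tree $G$ with edge set $E(G)$ and vertex degrees $d_G(v)$, the exponential of the second Zagreb index is $e^{M_2}(G)=\sum_{uv\in E(G)} e^{d_G(u)d_G(v)}$. For integers $x,y\geq 1$, the double star $S_{x,y}$ is the tree on $x+y+2$ vertices with exactly two non-pendent vertices, of degrees $x+1$ and $y+1$ (these two vertices are adjacent, the first has $x$ pendant neighbours and the second has $y$ pendant neighbours). *)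

theory Defs
  imports Complex_Main
begin

text \<open>A (simple, undirected) graph is given by its edge set; each edge is a
2-element set of vertices.  Degree of a vertex = number of edges containing it.\<close>

definition deg :: "'a set set \<Rightarrow> 'a \<Rightarrow> nat" where
  "deg E v = card {e \<in> E. v \<in> e}"

definition eM2 :: "'a set set \<Rightarrow> real" where
  "eM2 E = (\<Sum>e\<in>E. exp (real (\<Prod>v\<in>e. deg E v)))"

definition double_star :: "nat \<Rightarrow> nat \<Rightarrow> nat set set" where
  "double_star x y =
     {{0, 1}} \<union> {{0, i} | i. i \<in> {2..x+1}} \<union> {{1, i} | i. i \<in> {x+2..x+y+1}}"

end

theory Submission
  imports Defs
begin

lemma DS: "e \<in> double_star x y \<longleftrightarrow> e = {0,1} \<or> (\<exists>i\<in>{2..x+1}. e = {0,i}) \<or> (\<exists>i\<in>{x+2..x+y+1}. e = {1,i})"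
  unfolding double_star_def by blast
lemma E0: "{e \<in> double_star x y. (0::nat) \<in> e} = insert {0,1} ((\<lambda>i. {0,i}) ` {2..x+1})"
proof (rule set_eqI)
  fix e show "e \<in> {e \<in> double_star x y. (0::nat) \<in> e} \<longleftrightarrow> e \<in> insert {0,1} ((\<lambda>i. {0,i}) ` {2..x+1})"
    unfolding DS by auto
qed

lemma E1: "{e \<in> double_star x y. (1::nat) \<in> e} = insert {0,1} ((\<lambda>i. {1,i}) ` {x+2..x+y+1})"
proof (rule set_eqI)
  fix e show "e \<in> {e \<in> double_star x y. (1::nat) \<in> e} \<longleftrightarrow> e \<in> insert {0,1} ((\<lambda>i. {1,i}) ` {x+2..x+y+1})"
    unfolding DS by auto
qed

lemma Ei: assumes i: "i \<in> {2..x+1}" shows "{e \<in> double_star x y. (i::nat) \<in> e} = {{0,i}}"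
proof (rule set_eqI)
  fix e 
  have "e \<in> double_star x y \<and> i \<in> e \<longleftrightarrow> e = {0,i}"
  proof
    assume a: "e \<in> double_star x y \<and> i \<in> e"
    then have ie: "i \<in> e" by blast
    from a[THEN conjunct1, unfolded DS] show "e = {0,i}"
    proof (elim disjE bexE)
      assume "e = {0,1}" then show ?thesis using ie i by simp
    next
      fix j assume "j \<in> {2..x+1}" "e = {0,j}" then show ?thesis using ie i by auto
    next
      fix j assume "j \<in> {x+2..x+y+1}" "e = {1,j}" then show ?thesis using ie i by auto
    qed
  next
    assume "e = {0,i}" then show "e \<in> double_star x y \<and> i \<in> e" unfolding DS using i by blast
  qed
  then show "e \<in> {e \<in> double_star x y. (i::nat) \<in> e} \<longleftrightarrow> e \<in> {{0,i}}" by simp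
qed
lemma Ej: assumes i: "i \<in> {x+2..x+y+1}" shows "{e \<in> double_star x y. (i::nat) \<in> e} = {{1,i}}"
proof (rule set_eqI)
  fix e 
  have "e \<in> double_star x y \<and> i \<in> e \<longleftrightarrow> e = {1,i}"
  proof
    assume a: "e \<in> double_star x y \<and> i \<in> e"
    then have ie: "i \<in> e" by blast
    from a[THEN conjunct1, unfolded DS] show "e = {1,i}"
    proof (elim disjE bexE)
      assume "e = {0,1}" then show ?thesis using ie i by simp
    next
      fix j assume "j \<in> {2..x+1}" "e = {0,j}" then show ?thesis using ie i by auto
    next
      fix j assume "j \<in> {x+2..x+y+1}" "e = {1,j}" then show ?thesis using ie i by auto
    qed
  next
    assume "e = {1,i}" then show "e \<in> double_star x y \<and> i \<in> e" unfolding DS using i by blast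
  qed
  then show "e \<in> {e \<in> double_star x y. (i::nat) \<in> e} \<longleftrightarrow> e \<in> {{1,i}}" by simp
qed
lemma inj0: "inj_on (\<lambda>i::nat. {0,i}) {2..k}"
  by (auto simp: inj_on_def doubleton_eq_iff)

lemma inj1: "inj_on (\<lambda>i::nat. {1,i}) {2..k}"
  by (auto simp: inj_on_def doubleton_eq_iff)

lemma inj1': "inj_on (\<lambda>i::nat. {1,i}) {x+2..k}"
  by (auto simp: inj_on_def doubleton_eq_iff)

lemma notin0: "{0,1::nat} \<notin> (\<lambda>i. {0,i}) ` {2..k}"
proof
  assume "{0,1::nat} \<in> (\<lambda>i. {0,i}) ` {2..k}"
  then obtain i where i: "i \<in> {2..k}" and e: "{0,1::nat} = {0,i}" by blast
  have "(1::nat) \<in> {0,i}" using e by (metis insertI1 insertI2)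
  then show False using i by simp
qed

lemma notin1: "{0,1::nat} \<notin> (\<lambda>i. {1,i}) ` {x+2..k}"
proof
  assume "{0,1::nat} \<in> (\<lambda>i. {1,i}) ` {x+2..k}"
  then obtain i where i: "i \<in> {x+2..k}" and e: "{0,1::nat} = {1,i}" by blast
  have "(0::nat) \<in> {1,i}" using e by (metis insertI1)
  then show False using i by simp
qed

lemma deg0: "deg (double_star x y) 0 = x + 1"
proof -
  have c: "card ((\<lambda>i::nat. {0::nat,i}) ` {2..x+1}) = x"
    using card_image[OF inj0[of "x+1"]] by simp
  show ?thesis unfolding deg_def E0
    using card_insert_disjoint[OF finite_imageI[OF finite_atLeastAtMost] notin0, of "x+1"] c by simp
qed

lemma deg1: "deg (double_star x y) 1 = y + 1"
proof -
  have c: "card ((\<lambda>i::nat. {1::nat,i}) ` {x+2..x+y+1}) = y"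
    using card_image[OF inj1'[of x "x+y+1"]] by simp
  show ?thesis unfolding deg_def E1
    using card_insert_disjoint[OF finite_imageI[OF finite_atLeastAtMost] notin1, of x "x+y+1"] c by simp
qed

lemma degi: "i \<in> {2..x+1} \<Longrightarrow> deg (double_star x y) i = 1"
  unfolding deg_def by (simp only: Ei card.empty card_insert_disjoint finite.emptyI empty_iff) simp

lemma degj: "i \<in> {x+2..x+y+1} \<Longrightarrow> deg (double_star x y) i = 1"
  unfolding deg_def by (simp only: Ej card.empty card_insert_disjoint finite.emptyI empty_iff) simp

lemma disjBC: "(\<lambda>i. {0::nat,i}) ` {2..k} \<inter> (\<lambda>i. {1::nat,i}) ` {x+2..m} = {}"
proof (rule ccontr)
  assume "\<not> ?thesis"
  then obtain i j where i: "i \<in> {2..k}" and j: "j \<in> {x+2..m}" and e: "{0::nat,i} = {1,j}" by blast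
  have "(0::nat) \<in> {1,j}" using e by (metis insertI1)
  then show False using j by simp
qed

lemma eM2_ds:
  shows "eM2 (double_star x y) = exp (real ((x+1)*(y+1))) + real x * exp (real (x+1))
     + real y * exp (real (y+1))"
proof -
  let ?E = "double_star x y"
  let ?B = "(\<lambda>i. {0::nat,i}) ` {2..x+1}"
  let ?C = "(\<lambda>i. {1::nat,i}) ` {x+2..x+y+1}"
  let ?f = "\<lambda>e. exp (real (\<Prod>v\<in>e. deg ?E v))"
  have E: "?E = insert {0,1} (?B \<union> ?C)" unfolding double_star_def by blast
  have n1: "{0,1} \<notin> ?B \<union> ?C" using notin0[of "x+1"] notin1[of x "x+y+1"] by blast
  have disj: "?B \<inter> ?C = {}" by (rule disjBC)
  have sB: "sum ?f ?B = real x * exp (real (x+1))"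
  proof -
    have "sum ?f ?B = sum (?f \<circ> (\<lambda>i. {0::nat,i})) {2..x+1}"
      using inj0[of "x+1"] by (rule sum.reindex)
    also have "\<dots> = sum (\<lambda>i. exp (real (x+1))) {2..x+1}"
    proof (rule sum.cong)
      fix i assume i: "i \<in> {2..x+1}"
      then have "i \<noteq> 0" by simp
      then have "(\<Prod>v\<in>{0,i}. deg ?E v) = deg ?E 0 * deg ?E i" by simp
      then show "(?f \<circ> (\<lambda>i. {0::nat,i})) i = exp (real (x+1))"
        using degi[OF i, of y] deg0[of x y] by (simp del: of_nat_prod)
    qed simp
    finally show ?thesis by simp
  qed
  have sC: "sum ?f ?C = real y * exp (real (y+1))"
  proof -
    have "sum ?f ?C = sum (?f \<circ> (\<lambda>i. {1::nat,i})) {x+2..x+y+1}"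
      using inj1'[of x "x+y+1"] by (rule sum.reindex)
    also have "\<dots> = sum (\<lambda>i. exp (real (y+1))) {x+2..x+y+1}"
    proof (rule sum.cong)
      fix i assume i: "i \<in> {x+2..x+y+1}"
      then have "i \<noteq> 1" by simp
      then have "(\<Prod>v\<in>{1,i}. deg ?E v) = deg ?E 1 * deg ?E i" by simp
      then show "(?f \<circ> (\<lambda>i. {1::nat,i})) i = exp (real (y+1))"
        using degj[OF i] deg1[of x y] by (simp del: of_nat_prod)
    qed simp
    finally show ?thesis by simp
  qed
  have fin: "finite (?B \<union> ?C)" by simp
  have "eM2 ?E = ?f {0,1} + sum ?f (?B \<union> ?C)"
    unfolding eM2_def E by (rule sum.insert[OF fin n1])
  also have "sum ?f (?B \<union> ?C) = sum ?f ?B + sum ?f ?C"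
    using disj by (intro sum.union_disjoint) simp_all
  also have "?f {0,1} = exp (real ((x+1)*(y+1)))"
  proof -
    have "(\<Prod>v\<in>{0::nat,1}. deg ?E v) = deg ?E 0 * deg ?E 1" by simp
    then show ?thesis using deg0[of x y] deg1[of x y] by (simp del: of_nat_prod)
  qed
  finally show ?thesis using sB sC by simp
qed

lemma step:
  fixes x y :: nat
  assumes "y \<ge> 1" "x \<ge> y + 2"
  shows "exp (real ((x+1)*(y+1))) + real x * exp (real (x+1)) + real y * exp (real (y+1))
    < exp (real ((x-1+1)*(y+1+1))) + real (x-1) * exp (real (x-1+1)) + real (y+1) * exp (real (y+1+1))"
proof -
  let ?P = "real ((x+1)*(y+1))"
  have h1: "real ((x-1+1)*(y+1+1)) \<ge> ?P + 1"
  proof -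
    have "(x-1+1)*(y+1+1) \<ge> (x+1)*(y+1) + 1" using assms
      by (cases x) (auto simp: algebra_simps)
    then show ?thesis by linarith
  qed
  have e2: "exp (?P + 1) \<ge> 2 * exp ?P"
  proof -
    have "exp (1::real) \<ge> 2" using exp_ge_add_one_self[of 1] by simp
    then have "exp ?P * 2 \<le> exp ?P * exp 1" by (intro mult_left_mono) auto
    then show ?thesis unfolding exp_add by simp
  qed
  have h2: "?P \<ge> real (x+1) + real (x+1)"
  proof -
    have "(x+1)*(y+1) \<ge> (x+1)*2" using assms by (intro mult_left_mono) auto
    then have "?P \<ge> real ((x+1)*2)" by (simp only: of_nat_le_iff)
    then show ?thesis by simp
  qed
  have z1: "exp (real (x+1) + real (x+1)) \<le> exp ?P" using h2 by (simp only: exp_le_cancel_iff)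
  have z2: "exp (real (x+1) + real (x+1)) = exp (real (x+1)) * exp (real (x+1))" by (rule exp_add)
  have z3: "exp (real (x+1)) * exp (real (x+1)) > real x * exp (real (x+1))"
  proof -
    have "exp (real (x+1)) > real x" using exp_ge_add_one_self[of "real (x+1)"] by simp
    then show ?thesis by (simp add: mult_strict_right_mono)
  qed
  have k1: "exp ?P > real x * exp (real (x+1))" using z1 z2 z3 by linarith
  have k2: "exp (real ((x-1+1)*(y+1+1))) \<ge> exp (?P + 1)" using h1 by (simp only: exp_le_cancel_iff)
  have k3: "real (y+1) * exp (real (y+1+1)) \<ge> real y * exp (real (y+1))"
    by (intro mult_mono) auto
  have k4: "real (x-1) * exp (real (x-1+1)) \<ge> 0" by simp
  show ?thesis using k1 k2 k3 k4 e2 by linarith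
qed

theorem lemma3:
  fixes n x y :: nat
  assumes "n \<ge> 4" and "x \<ge> 1" and "y \<ge> 1" and "x + y = n - 2"
    and "\<forall>x' y'. x' \<ge> 1 \<and> y' \<ge> 1 \<and> x' + y' = n - 2 \<longrightarrow>
                eM2 (double_star x' y') \<le> eM2 (double_star x y)"
  shows "\<bar>int x - int y\<bar> \<le> 1
    \<and> {x, y} = {(n - 2) div 2, (n - 1) div 2}
    \<and> eM2 (double_star ((n - 2) div 2) ((n - 1) div 2)) =
        (if even n
         then exp (real n ^ 2 / 4) + (real n - 2) * exp (real n / 2)
         else exp ((real n ^ 2 - 1) / 4) + (real n - 3) / 2 * exp ((real n - 1) / 2)
              + (real n - 1) / 2 * exp ((real n + 1) / 2))"
proof -
  have bal: "\<bar>int x - int y\<bar> \<le> 1"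
  proof (rule ccontr)
    assume "\<not> ?thesis"
    then have "x \<ge> y + 2 \<or> y \<ge> x + 2" by linarith
    then show False
    proof
      assume a: "x \<ge> y + 2"
      have "eM2 (double_star (x-1) (y+1)) \<le> eM2 (double_star x y)"
        using assms(3,4) a by (intro assms(5)[rule_format]) auto
      then show False using step[OF assms(3) a] unfolding eM2_ds by linarith
    next
      assume a: "y \<ge> x + 2"
      have "eM2 (double_star (x+1) (y-1)) \<le> eM2 (double_star x y)"
        using assms(2,4) a by (intro assms(5)[rule_format]) auto
      then show False using step[OF assms(2) a] unfolding eM2_ds
        by (simp add: algebra_simps)
    qed
  qed
  have set: "{x, y} = {(n - 2) div 2, (n - 1) div 2}"
  proof -
    have "(x = y \<or> x = y + 1 \<or> y = x + 1)" using bal by linarith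
    then show ?thesis using assms(4) by (auto simp: insert_commute; presburger)
  qed
  have val: "eM2 (double_star ((n - 2) div 2) ((n - 1) div 2)) =
        (if even n
         then exp (real n ^ 2 / 4) + (real n - 2) * exp (real n / 2)
         else exp ((real n ^ 2 - 1) / 4) + (real n - 3) / 2 * exp ((real n - 1) / 2)
              + (real n - 1) / 2 * exp ((real n + 1) / 2))"
  proof (cases "even n")
    case True
    then obtain k where k: "n = 2*k" by blast
    with assms(1) have k2: "k \<ge> 2" by simp
    have a: "(n-2) div 2 = k - 1" "(n-1) div 2 = k - 1" using k k2 by auto
    have r: "real (k-1) = real k - 1" using k2 by simp
    show ?thesis using True unfolding eM2_ds a using k2
      by (simp add: k r of_nat_diff power2_eq_square algebra_simps)
  next
    case False
    then obtain k where k: "n = 2*k+1" using oddE by blast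
    with assms(1) have k2: "k \<ge> 2" by simp
    have a: "(n-2) div 2 = k - 1" "(n-1) div 2 = k" using k k2 by auto
    have r: "real (k-1) = real k - 1" using k2 by simp
    have rn: "real n = 2 * real k + 1" using k by simp
    have kk: "k-1+1 = k" using k2 by simp
    have t1: "exp (real ((k-1+1)*(k+1))) = exp ((real n ^ 2 - 1) / 4)"
    proof -
      have A: "real (k*(k+1)) = (real n ^ 2 - 1) / 4"
        unfolding rn by (simp add: power2_eq_square algebra_simps)
      show ?thesis unfolding kk A ..
    qed
    have t2: "real (k-1) * exp (real (k-1+1)) = (real n - 3) / 2 * exp ((real n - 1) / 2)"
    proof -
      have A: "real (k-1) = (real n - 3) / 2" "real (k-1+1) = (real n - 1) / 2"
        unfolding rn r using k2 by simp_all
      show ?thesis unfolding A ..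
    qed
    have t3: "real k * exp (real (k+1)) = (real n - 1) / 2 * exp ((real n + 1) / 2)"
    proof -
      have A: "real (k+1) = (real n + 1) / 2" "real k = (real n - 1) / 2" unfolding rn by simp_all
      show ?thesis unfolding A ..
    qed
    show ?thesis using False unfolding eM2_ds a t1 t2 t3 by simp
  qed
  show ?thesis using bal set val by blast
qed

end
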